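(* Consider $N$ material points $(P_i,m_i)$ whose Cartesian coordinates are given by a smooth map $\mathbf X(\mathbf q,t)\in\mathbb R^{3N}$, $\mathbf q\in\mathbb R^\ell$, and let $\mathbf Q=(m_1\dot P_1,\dots,m_N\dot P_N)\in\mathbb R^{3N}$ be the vector of momenta. For $r\ge0$ define $\mathcal T_r=\frac12\,\mathbf Q^{(r)}\cdot\mathbf X^{(r+1)}=\frac12\sum_{i=1}^N m_i|P_i^{(r+1)}|^2$, viewed as a function of $\mathbf q,\dots,\mathbf q^{(r+1)},t$. Then for every $k=1,\dots,\ell$, $$\mathbf Q^{(r+1)}\cdot\frac{\partial\mathbf X}{\partial q_k}=\frac{d}{dt}\frac{\partial\mathcal T_r}{\partial q_k^{(r+1)}}-\frac1{r+1}\frac{\partial\mathcal T_r}{\partial q_k^{(r)}}.$$ Equivalently, $J_{\mathbf q}^T\mathbf X\,\mathbf Q^{(r+1)}=-\frac1{r+1}\mathcal O_r[\mathcal T_r]$.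
   Context: $\mathbf q^{(h)}$ denotes the $h$-th time derivative (with $\mathbf q^{(0)}=\mathbf q$), treated as independent variables; $\mathbf X^{(h)}$ is the $h$-th total time derivative of $\mathbf X(\mathbf q(t),t)$ expressed as a function of $\mathbf q,\dots,\mathbf q^{(h)},t$. For $F(\mathbf q,\dots,\mathbf q^{(k)},t)$, $\frac{dF}{dt}=\partial_tF+\sum_{j=0}^k\nabla_{\mathbf q^{(j)}}F\cdot\mathbf q^{(j+1)}$. For $\mathbf w\in\mathbb R^{3N}$, $J_{\mathbf q}^T\mathbf X\,\mathbf w$ is the $\ell$-vector with components $\mathbf w\cdot\partial\mathbf X/\partial q_k$ (Lagrangian components of $\mathbf w$). $\mathcal O_r[\mathcal Y_r]=\nabla_{\mathbf q^{(r)}}\mathcal Y_r-(r+1)\frac{d}{dt}\nabla_{\mathbf q^{(r+1)}}\mathcal Y_r$. *)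

theory Defs
  imports "HOL-Analysis.Analysis"
begin

text \<open>Iterated directional derivatives: the list [v1,...,vn] means differentiate
  first along vn, then ..., finally along v1.\<close>
fun iter_dirderiv ::
  "('a::real_normed_vector \<Rightarrow> 'b::real_normed_vector) \<Rightarrow> 'a list \<Rightarrow> 'a \<Rightarrow> 'b" where
  "iter_dirderiv f [] = f"
| "iter_dirderiv f (v # vs) =
     (\<lambda>x. vector_derivative (\<lambda>s::real. iter_dirderiv f vs (x + s *\<^sub>R v)) (at 0))"

definition smooth :: "('a::real_normed_vector \<Rightarrow> 'b::real_normed_vector) \<Rightarrow> bool" where
  "smooth f \<longleftrightarrow> (\<forall>vs x. iter_dirderiv f vs differentiable (at x))"

text \<open>A point of jet space is a pair (qs, t) where qs j = q^(j) \<in> R^l (only finitely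
  many j matter) and t is time. Functions F(q, ..., q^(k), t) are modelled as
  functions of (qs, t) that only depend on qs 0, ..., qs k.\<close>

type_synonym ('l, 'b) jetfun = "(nat \<Rightarrow> real ^ 'l) \<Rightarrow> real \<Rightarrow> 'b"

definition pderiv_q ::
  "nat \<Rightarrow> 'l::finite \<Rightarrow> ('l, 'b::real_normed_vector) jetfun \<Rightarrow> ('l, 'b) jetfun" where
  "pderiv_q j k F = (\<lambda>qs t. vector_derivative
       (\<lambda>s::real. F (qs(j := qs j + s *\<^sub>R axis k 1)) t) (at 0))"

definition pderiv_t :: "('l::finite, 'b::real_normed_vector) jetfun \<Rightarrow> ('l, 'b) jetfun" where
  "pderiv_t F = (\<lambda>qs t. vector_derivative (\<lambda>\<tau>. F qs \<tau>) (at t))"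

definition total_dt ::
  "nat \<Rightarrow> ('l::finite, 'b::real_normed_vector) jetfun \<Rightarrow> ('l, 'b) jetfun" where
  "total_dt kk F = (\<lambda>qs t. pderiv_t F qs t +
       (\<Sum>j\<le>kk. \<Sum>k\<in>UNIV. (qs (Suc j) $ k) *\<^sub>R pderiv_q j k F qs t))"

text \<open>X (q, t) $ i \<in> R^3 is the position of the point P_i ('p is the finite index
  set of the N points, so X(q,t) \<in> R^{3N}).\<close>
fun Xder :: "((real ^ 'l) \<times> real \<Rightarrow> real ^ 3 ^ 'p) \<Rightarrow> nat \<Rightarrow> ('l::finite, real ^ 3 ^ 'p) jetfun" where
  "Xder X 0 = (\<lambda>qs t. X (qs 0, t))"
| "Xder X (Suc h) = total_dt h (Xder X h)"

definition Qder :: "('p::finite \<Rightarrow> real) \<Rightarrow> ((real ^ 'l) \<times> real \<Rightarrow> real ^ 3 ^ 'p) \<Rightarrow> nat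
    \<Rightarrow> ('l::finite, real ^ 3 ^ 'p) jetfun" where
  "Qder m X r = (\<lambda>qs t. \<chi> i. m i *\<^sub>R (Xder X (Suc r) qs t $ i))"

definition Tr :: "('p::finite \<Rightarrow> real) \<Rightarrow> ((real ^ 'l) \<times> real \<Rightarrow> real ^ 3 ^ 'p) \<Rightarrow> nat
    \<Rightarrow> ('l::finite, real) jetfun" where
  "Tr m X r = (\<lambda>qs t. (1/2) * (Qder m X r qs t \<bullet> Xder X (Suc r) qs t))"

end

theory Submission
  imports Defs
begin


definition Dd :: "('a::real_normed_vector \<Rightarrow> 'b::real_normed_vector) \<Rightarrow> 'a \<Rightarrow> 'a \<Rightarrow> 'b" where
  "Dd f u y = vector_derivative (\<lambda>s::real. f (y + s *\<^sub>R u)) (at 0)"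

lemma iter_Cons: "iter_dirderiv f (v # vs) = Dd (iter_dirderiv f vs) v"
  by (simp add: Dd_def fun_eq_iff)

lemma dir_hvd:
  assumes "f differentiable (at (x + s0 *\<^sub>R u))"
  shows "((\<lambda>s. f (x + s *\<^sub>R u)) has_vector_derivative Dd f u (x + s0 *\<^sub>R u)) (at s0)"
proof -
  from assms obtain f' where f': "(f has_derivative f') (at (x + s0 *\<^sub>R u))"
    unfolding differentiable_def by blast
  have lin: "linear f'" using f' has_derivative_linear by blast
  have g: "((\<lambda>s::real. x + s *\<^sub>R u) has_derivative (\<lambda>h. h *\<^sub>R u)) (at s0)" for x s0
    by (auto intro!: derivative_eq_intros)
  have c: "((\<lambda>s. f (x + s *\<^sub>R u)) has_derivative (\<lambda>h. f' (h *\<^sub>R u))) (at s0)"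
    using diff_chain_at[OF g f'] by (simp add: o_def)
  have c2: "((\<lambda>s. f (x + s0 *\<^sub>R u + s *\<^sub>R u)) has_derivative (\<lambda>h. f' (h *\<^sub>R u))) (at 0)"
    using diff_chain_at[OF g[of "x + s0 *\<^sub>R u" 0]] f' by (simp add: o_def)
  have e: "(\<lambda>h. f' (h *\<^sub>R u)) = (\<lambda>h. h *\<^sub>R f' u)"
    using lin by (simp add: linear_cmul)
  have "Dd f u (x + s0 *\<^sub>R u) = f' u"
    unfolding Dd_def
    apply (rule vector_derivative_at)
    using c2 unfolding has_vector_derivative_def e .
  then show ?thesis using c unfolding has_vector_derivative_def e by simp
qed

lemma dir_hvd0:
  assumes "f differentiable (at x)"
  shows "((\<lambda>s. f (x + s *\<^sub>R u)) has_vector_derivative Dd f u x) (at 0)"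
  using dir_hvd[of f x 0 u] assms by simp

lemma schwarz_real:
  fixes g :: "'a::real_normed_vector \<Rightarrow> real"
  assumes d0: "\<And>y. g differentiable (at y)"
    and du: "\<And>y. Dd g u differentiable (at y)"
    and dw: "\<And>y. Dd g w differentiable (at y)"
    and duw: "\<And>y. Dd (Dd g u) w differentiable (at y)"
    and dwu: "\<And>y. Dd (Dd g w) u differentiable (at y)"
  shows "Dd (Dd g u) w x = Dd (Dd g w) u x"
proof (rule ccontr)
  define A where "A = Dd (Dd g u) w"
  define B where "B = Dd (Dd g w) u"
  assume ne: "Dd (Dd g u) w x \<noteq> Dd (Dd g w) u x"
  define c where "c = \<bar>A x - B x\<bar>"
  have cpos: "c > 0" using ne by (simp add: c_def A_def B_def)
  have cA: "isCont A x" using duw differentiable_imp_continuous_within A_def by blast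
  have cB: "isCont B x" using dwu differentiable_imp_continuous_within B_def by blast
  obtain d1 where d1: "d1 > 0" "\<And>y. dist y x < d1 \<Longrightarrow> dist (A y) (A x) < c/2"
    using cA cpos unfolding continuous_at_eps_delta by (meson half_gt_zero)
  obtain d2 where d2: "d2 > 0" "\<And>y. dist y x < d2 \<Longrightarrow> dist (B y) (B x) < c/2"
    using cB cpos unfolding continuous_at_eps_delta by (meson half_gt_zero)
  define d where "d = min d1 d2"
  have dpos: "d > 0" using d1 d2 by (simp add: d_def)
  define s where "s = d / (2 * (norm u + norm w + 1))"
  have N: "0 < 2 * (norm u + norm w + 1)" by (smt (verit) norm_ge_zero)
  then have spos: "s > 0" using dpos unfolding s_def by (simp add: divide_pos_pos)
  have sless: "s * (norm u + norm w) < d"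
  proof -
    have "s * (norm u + norm w) \<le> s * (norm u + norm w + 1)" using spos by simp
    also have "\<dots> = d / 2" unfolding s_def using N by (simp add: field_simps)
    also have "\<dots> < d" using dpos by simp
    finally show ?thesis .
  qed
  have close: "dist (x + a *\<^sub>R u + b *\<^sub>R w) x < d" if "0 < a" "a < s" "0 < b" "b < s" for a b
  proof -
    have "dist (x + a *\<^sub>R u + b *\<^sub>R w) x = norm (a *\<^sub>R u + b *\<^sub>R w)"
      by (simp add: dist_norm)
    also have "\<dots> \<le> a * norm u + b * norm w"
      using that by (metis (no_types, opaque_lifting) abs_of_pos norm_scaleR norm_triangle_ineq)
    also have "\<dots> \<le> s * norm u + s * norm w"
      using that by (intro add_mono mult_right_mono) auto
    also have "\<dots> < d" using sless by (simp add: algebra_simps)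
    finally show ?thesis .
  qed
  define Del where "Del = g (x + s *\<^sub>R u + s *\<^sub>R w) - g (x + s *\<^sub>R u) - g (x + s *\<^sub>R w) + g x"
  obtain a1 where a1: "0 < a1" "a1 < s"
    "(\<lambda>a. g (x + s *\<^sub>R w + a *\<^sub>R u) - g (x + a *\<^sub>R u)) s - (\<lambda>a. g (x + s *\<^sub>R w + a *\<^sub>R u) - g (x + a *\<^sub>R u)) 0
      = (s - 0) * (Dd g u (x + s *\<^sub>R w + a1 *\<^sub>R u) - Dd g u (x + a1 *\<^sub>R u))"
  proof -
    have "\<exists>z>0. z < s \<and> (\<lambda>a. g (x + s *\<^sub>R w + a *\<^sub>R u) - g (x + a *\<^sub>R u)) s - (\<lambda>a. g (x + s *\<^sub>R w + a *\<^sub>R u) - g (x + a *\<^sub>R u)) 0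
      = (s - 0) * (Dd g u (x + s *\<^sub>R w + z *\<^sub>R u) - Dd g u (x + z *\<^sub>R u))"
      apply (rule MVT2[OF spos])
      unfolding has_real_derivative_iff_has_vector_derivative
      by (intro has_vector_derivative_diff dir_hvd d0)
    then show ?thesis using that by blast
  qed
  obtain b1 where b1: "0 < b1" "b1 < s"
    "Dd g u (x + a1 *\<^sub>R u + s *\<^sub>R w) - Dd g u (x + a1 *\<^sub>R u + 0 *\<^sub>R w) = (s - 0) * A (x + a1 *\<^sub>R u + b1 *\<^sub>R w)"
  proof -
    have "\<exists>z>0. z < s \<and> Dd g u (x + a1 *\<^sub>R u + s *\<^sub>R w) - Dd g u (x + a1 *\<^sub>R u + 0 *\<^sub>R w) = (s - 0) * A (x + a1 *\<^sub>R u + z *\<^sub>R w)"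
      apply (rule MVT2[OF spos, where f = "\<lambda>b. Dd g u (x + a1 *\<^sub>R u + b *\<^sub>R w)"])
      unfolding has_real_derivative_iff_has_vector_derivative A_def
      by (intro dir_hvd du)
    then show ?thesis using that by blast
  qed
  have Del1: "Del = s * (s * A (x + a1 *\<^sub>R u + b1 *\<^sub>R w))"
  proof -
    have "Del = s * (Dd g u (x + s *\<^sub>R w + a1 *\<^sub>R u) - Dd g u (x + a1 *\<^sub>R u))"
      using a1(3) unfolding Del_def by (simp add: algebra_simps)
    also have "Dd g u (x + s *\<^sub>R w + a1 *\<^sub>R u) - Dd g u (x + a1 *\<^sub>R u) = s * A (x + a1 *\<^sub>R u + b1 *\<^sub>R w)"
      using b1(3) by (simp add: algebra_simps)
    finally show ?thesis .
  qed
  obtain b2 where b2: "0 < b2" "b2 < s"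
    "(\<lambda>b. g (x + s *\<^sub>R u + b *\<^sub>R w) - g (x + b *\<^sub>R w)) s - (\<lambda>b. g (x + s *\<^sub>R u + b *\<^sub>R w) - g (x + b *\<^sub>R w)) 0
      = (s - 0) * (Dd g w (x + s *\<^sub>R u + b2 *\<^sub>R w) - Dd g w (x + b2 *\<^sub>R w))"
  proof -
    have "\<exists>z>0. z < s \<and> (\<lambda>b. g (x + s *\<^sub>R u + b *\<^sub>R w) - g (x + b *\<^sub>R w)) s - (\<lambda>b. g (x + s *\<^sub>R u + b *\<^sub>R w) - g (x + b *\<^sub>R w)) 0
      = (s - 0) * (Dd g w (x + s *\<^sub>R u + z *\<^sub>R w) - Dd g w (x + z *\<^sub>R w))"
      apply (rule MVT2[OF spos])
      unfolding has_real_derivative_iff_has_vector_derivative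
      by (intro has_vector_derivative_diff dir_hvd d0)
    then show ?thesis using that by blast
  qed
  obtain a2 where a2: "0 < a2" "a2 < s"
    "Dd g w (x + b2 *\<^sub>R w + s *\<^sub>R u) - Dd g w (x + b2 *\<^sub>R w + 0 *\<^sub>R u) = (s - 0) * B (x + b2 *\<^sub>R w + a2 *\<^sub>R u)"
  proof -
    have "\<exists>z>0. z < s \<and> Dd g w (x + b2 *\<^sub>R w + s *\<^sub>R u) - Dd g w (x + b2 *\<^sub>R w + 0 *\<^sub>R u) = (s - 0) * B (x + b2 *\<^sub>R w + z *\<^sub>R u)"
      apply (rule MVT2[OF spos, where f = "\<lambda>a. Dd g w (x + b2 *\<^sub>R w + a *\<^sub>R u)"])
      unfolding has_real_derivative_iff_has_vector_derivative B_def
      by (intro dir_hvd dw)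
    then show ?thesis using that by blast
  qed
  have Del2: "Del = s * (s * B (x + a2 *\<^sub>R u + b2 *\<^sub>R w))"
  proof -
    have "Del = s * (Dd g w (x + s *\<^sub>R u + b2 *\<^sub>R w) - Dd g w (x + b2 *\<^sub>R w))"
      using b2(3) unfolding Del_def by (simp add: algebra_simps)
    also have "Dd g w (x + s *\<^sub>R u + b2 *\<^sub>R w) - Dd g w (x + b2 *\<^sub>R w) = s * B (x + a2 *\<^sub>R u + b2 *\<^sub>R w)"
      using a2(3) by (simp add: algebra_simps)
    finally show ?thesis .
  qed
  have eq: "A (x + a1 *\<^sub>R u + b1 *\<^sub>R w) = B (x + a2 *\<^sub>R u + b2 *\<^sub>R w)"
    using Del1 Del2 spos by simp
  have h1: "\<bar>A (x + a1 *\<^sub>R u + b1 *\<^sub>R w) - A x\<bar> < c/2"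
    using d1(2)[OF order.strict_trans2[OF close[OF a1(1,2) b1(1,2)]]] by (simp add: d_def dist_real_def)
  have h2: "\<bar>B (x + a2 *\<^sub>R u + b2 *\<^sub>R w) - B x\<bar> < c/2"
    using d2(2)[OF order.strict_trans2[OF close[OF a2(1,2) b2(1,2)]]] by (simp add: d_def dist_real_def)
  show False using h1 h2 eq c_def by linarith
qed

lemma Dd_inner:
  assumes "\<And>y. f differentiable (at y)"
  shows "Dd (\<lambda>y. f y \<bullet> e) u = (\<lambda>y. Dd f u y \<bullet> e)"
proof
  fix y
  have "((\<lambda>s. f (y + s *\<^sub>R u) \<bullet> e) has_vector_derivative (Dd f u y \<bullet> e)) (at 0)"
    using bounded_bilinear.has_vector_derivative[OF bounded_bilinear_inner dir_hvd0[OF assms] has_vector_derivative_const[of e]]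
    by simp
  then show "Dd (\<lambda>y. f y \<bullet> e) u y = Dd f u y \<bullet> e"
    unfolding Dd_def by (rule vector_derivative_at)
qed

lemma diff_inner:
  assumes "f differentiable (at y)"
  shows "(\<lambda>y. f y \<bullet> e) differentiable (at y)"
  using assms unfolding differentiable_def using has_derivative_inner_left by blast

lemma schwarz_vec:
  fixes f :: "'a::real_normed_vector \<Rightarrow> 'b::real_inner"
  assumes d0: "\<And>y. f differentiable (at y)"
    and du: "\<And>y. Dd f u differentiable (at y)"
    and dw: "\<And>y. Dd f w differentiable (at y)"
    and duw: "\<And>y. Dd (Dd f u) w differentiable (at y)"
    and dwu: "\<And>y. Dd (Dd f w) u differentiable (at y)"
  shows "Dd (Dd f u) w x = Dd (Dd f w) u x"
proof -
  have "Dd (Dd f u) w x \<bullet> e = Dd (Dd f w) u x \<bullet> e" for e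
  proof -
    have 1: "Dd (Dd (\<lambda>y. f y \<bullet> e) u) w = (\<lambda>y. Dd (Dd f u) w y \<bullet> e)"
      using Dd_inner[OF d0] Dd_inner[OF du] by simp
    have 2: "Dd (Dd (\<lambda>y. f y \<bullet> e) w) u = (\<lambda>y. Dd (Dd f w) u y \<bullet> e)"
      using Dd_inner[OF d0] Dd_inner[OF dw] by simp
    have "Dd (Dd (\<lambda>y. f y \<bullet> e) u) w x = Dd (Dd (\<lambda>y. f y \<bullet> e) w) u x"
      apply (rule schwarz_real)
      using diff_inner d0 du dw duw dwu by (auto simp: Dd_inner)
    then show ?thesis using 1 2 by simp
  qed
  from this[of "Dd (Dd f u) w x - Dd (Dd f w) u x"]
  have "(Dd (Dd f u) w x - Dd (Dd f w) u x) \<bullet> (Dd (Dd f u) w x - Dd (Dd f w) u x) = 0"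
    by (simp add: inner_diff_left)
  then show ?thesis by simp
qed

lemma smooth_diff: "smooth X \<Longrightarrow> iter_dirderiv X vs differentiable (at x)"
  by (simp add: smooth_def)

lemma iter_swap:
  fixes X :: "'a::real_normed_vector \<Rightarrow> 'b::real_inner"
  assumes "smooth X"
  shows "iter_dirderiv X (u # w # vs) = iter_dirderiv X (w # u # vs)"
proof
  fix x
  have D: "\<And>vs y. iter_dirderiv X vs differentiable (at y)" using assms smooth_diff by blast
  show "iter_dirderiv X (u # w # vs) x = iter_dirderiv X (w # u # vs) x"
    unfolding iter_Cons
    apply (rule schwarz_vec)
    using D[of "_ # _", unfolded iter_Cons] D[of "_ # _ # _", unfolded iter_Cons] D by auto
qed



inductive good :: "((real^'l) \<times> real \<Rightarrow> 'b::real_inner) \<Rightarrow> ('l::finite, 'b) jetfun \<Rightarrow> bool" for X where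
  gB: "good X (\<lambda>qs t. iter_dirderiv X vs (qs 0, t))"
| gZ: "good X (\<lambda>qs t. 0)"
| gA: "good X F \<Longrightarrow> good X G \<Longrightarrow> good X (\<lambda>qs t. F qs t + G qs t)"
| gS: "good X F \<Longrightarrow> good X (\<lambda>qs t. c *\<^sub>R F qs t)"
| gM: "good X F \<Longrightarrow> good X (\<lambda>qs t. (qs j $ i) *\<^sub>R F qs t)"

lemma hvd_cmul: "(f has_vector_derivative f') net \<Longrightarrow> ((\<lambda>x. c *\<^sub>R f x) has_vector_derivative c *\<^sub>R f') net"
  by (rule bounded_linear.has_vector_derivative[OF bounded_linear_scaleR_right])

lemma pq_eq: "((\<lambda>s. F (qs(j := qs j + s *\<^sub>R axis k 1)) t) has_vector_derivative D) (at 0)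
   \<Longrightarrow> pderiv_q j k F qs t = D"
  by (simp add: pderiv_q_def vector_derivative_at)

lemma pt_eq: "((\<lambda>\<tau>. F qs \<tau>) has_vector_derivative D) (at t) \<Longrightarrow> pderiv_t F qs t = D"
  by (simp add: pderiv_t_def vector_derivative_at)

lemma hq_B:
  fixes X :: "(real^'l::finite) \<times> real \<Rightarrow> 'b::real_inner"
  assumes "smooth X"
  shows "((\<lambda>s. iter_dirderiv X vs ((qs(j := qs j + s *\<^sub>R axis k 1)) 0, t)) has_vector_derivative
      (if j = 0 then iter_dirderiv X ((axis k 1, 0) # vs) (qs 0, t) else 0)) (at 0)"
proof (cases "j = 0")
  case True
  have e: "(\<lambda>s. iter_dirderiv X vs ((qs(j := qs j + s *\<^sub>R axis k 1)) 0, t))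
     = (\<lambda>s. iter_dirderiv X vs ((qs 0, t) + s *\<^sub>R (axis k 1, 0)))"
    using True by simp
  have h: "((\<lambda>s. iter_dirderiv X vs ((qs 0, t) + s *\<^sub>R (axis k 1, 0))) has_vector_derivative
      iter_dirderiv X ((axis k 1, 0) # vs) (qs 0, t)) (at 0)"
    unfolding iter_Cons by (rule dir_hvd0[OF smooth_diff[OF assms]])
  show ?thesis unfolding e using True h by (simp only: simp_thms if_True)
next
  case False
  then show ?thesis by simp
qed

lemma ht_B:
  fixes X :: "(real^'l::finite) \<times> real \<Rightarrow> 'b::real_inner"
  assumes "smooth X"
  shows "((\<lambda>\<tau>. iter_dirderiv X vs (qs 0, \<tau>)) has_vector_derivative
      iter_dirderiv X ((0, 1) # vs) (qs 0, t)) (at t)"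
proof -
  have e: "(\<lambda>\<tau>. iter_dirderiv X vs (qs 0, \<tau>)) = (\<lambda>s. iter_dirderiv X vs ((qs 0, 0) + s *\<^sub>R (0, 1)))"
    by simp
  have h: "((\<lambda>s. iter_dirderiv X vs ((qs 0, 0) + s *\<^sub>R (0, 1))) has_vector_derivative
      iter_dirderiv X ((0, 1) # vs) ((qs 0, 0) + t *\<^sub>R (0, 1))) (at t)"
    unfolding iter_Cons by (rule dir_hvd[OF smooth_diff[OF assms]])
  have e2: "(qs 0, 0) + t *\<^sub>R (0, 1) = (qs 0, t)" by simp
  show ?thesis unfolding e using h unfolding e2 .
qed

lemma coord_hvd:
  "((\<lambda>s. (qs(j' := qs j' + s *\<^sub>R axis k 1)) j $ i) has_real_derivative
      (if j' = j \<and> k = i then 1 else 0)) (at s0)"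
proof (cases "j' = j")
  case True
  have e: "(\<lambda>s. (qs(j' := qs j' + s *\<^sub>R axis k 1)) j $ i) = (\<lambda>s. qs j $ i + s * (if i = k then 1 else 0))"
    using True by (auto simp: axis_def)
  show ?thesis unfolding e using True by (auto intro!: derivative_eq_intros)
next
  case False
  then show ?thesis by simp
qed

lemma good_hq:
  fixes X :: "(real^'l::finite) \<times> real \<Rightarrow> 'b::real_inner"
  assumes "smooth X" and "good X F"
  shows "((\<lambda>s. F (qs(j := qs j + s *\<^sub>R axis k 1)) t) has_vector_derivative pderiv_q j k F qs t) (at 0)"
  using assms(2)
proof (induction arbitrary: qs t)
  case (gB vs)
  have e: "pderiv_q j k (\<lambda>qs t. iter_dirderiv X vs (qs 0, t)) qs t
      = (if j = 0 then iter_dirderiv X ((axis k 1, 0) # vs) (qs 0, t) else 0)"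
    by (rule pq_eq) (rule hq_B[OF assms(1)])
  show ?case unfolding e by (rule hq_B[OF assms(1)])
next
  case gZ
  have e: "pderiv_q j k (\<lambda>qs t. 0) qs t = 0" by (rule pq_eq) simp
  show ?case unfolding e by simp
next
  case (gA F G)
  have h: "((\<lambda>s. F (qs(j := qs j + s *\<^sub>R axis k 1)) t + G (qs(j := qs j + s *\<^sub>R axis k 1)) t)
      has_vector_derivative pderiv_q j k F qs t + pderiv_q j k G qs t) (at 0)"
    using gA.IH by (intro has_vector_derivative_add)
  have e: "pderiv_q j k (\<lambda>qs t. F qs t + G qs t) qs t = pderiv_q j k F qs t + pderiv_q j k G qs t"
    by (rule pq_eq) (rule h)
  show ?case unfolding e by (rule h)
next
  case (gS F c)
  have h: "((\<lambda>s. c *\<^sub>R F (qs(j := qs j + s *\<^sub>R axis k 1)) t)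
      has_vector_derivative c *\<^sub>R pderiv_q j k F qs t) (at 0)"
    using gS.IH by (intro hvd_cmul)
  have e: "pderiv_q j k (\<lambda>qs t. c *\<^sub>R F qs t) qs t = c *\<^sub>R pderiv_q j k F qs t"
    by (rule pq_eq) (rule h)
  show ?case unfolding e by (rule h)
next
  case (gM F j' i)
  have h0: "((\<lambda>s. (qs(j := qs j + s *\<^sub>R axis k 1)) j' $ i *\<^sub>R F (qs(j := qs j + s *\<^sub>R axis k 1)) t)
      has_vector_derivative (qs(j := qs j + 0 *\<^sub>R axis k 1)) j' $ i *\<^sub>R pderiv_q j k F qs t
         + (if j = j' \<and> k = i then 1 else 0) *\<^sub>R F (qs(j := qs j + 0 *\<^sub>R axis k 1)) t) (at 0)"
    using gM.IH by (intro has_vector_derivative_scaleR coord_hvd)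
  have h: "((\<lambda>s. (qs(j := qs j + s *\<^sub>R axis k 1)) j' $ i *\<^sub>R F (qs(j := qs j + s *\<^sub>R axis k 1)) t)
      has_vector_derivative qs j' $ i *\<^sub>R pderiv_q j k F qs t
         + (if j = j' \<and> k = i then 1 else 0) *\<^sub>R F qs t) (at 0)"
    using h0 by (simp only: scale_zero_left add_0_right fun_upd_triv)
  have e: "pderiv_q j k (\<lambda>qs t. qs j' $ i *\<^sub>R F qs t) qs t = qs j' $ i *\<^sub>R pderiv_q j k F qs t
         + (if j = j' \<and> k = i then 1 else 0) *\<^sub>R F qs t"
    by (rule pq_eq) (rule h)
  show ?case unfolding e by (rule h)
qed

lemma good_ht:
  fixes X :: "(real^'l::finite) \<times> real \<Rightarrow> 'b::real_inner"
  assumes "smooth X" and "good X F"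
  shows "((\<lambda>\<tau>. F qs \<tau>) has_vector_derivative pderiv_t F qs t) (at t)"
  using assms(2)
proof (induction arbitrary: qs t)
  case (gB vs)
  have e: "pderiv_t (\<lambda>qs t. iter_dirderiv X vs (qs 0, t)) qs t = iter_dirderiv X ((0, 1) # vs) (qs 0, t)"
    by (rule pt_eq) (rule ht_B[OF assms(1)])
  show ?case unfolding e by (rule ht_B[OF assms(1)])
next
  case gZ
  have h: "pderiv_t (\<lambda>qs t. 0) qs t = 0" by (rule pt_eq) simp
  show ?case unfolding h by simp
next
  case (gA F G)
  have h: "((\<lambda>\<tau>. F qs \<tau> + G qs \<tau>) has_vector_derivative pderiv_t F qs t + pderiv_t G qs t) (at t)"
    using gA.IH by (intro has_vector_derivative_add)
  have e: "pderiv_t (\<lambda>qs t. F qs t + G qs t) qs t = pderiv_t F qs t + pderiv_t G qs t" by (rule pt_eq) (rule h)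
  show ?case unfolding e by (rule h)
next
  case (gS F c)
  have h: "((\<lambda>\<tau>. c *\<^sub>R F qs \<tau>) has_vector_derivative c *\<^sub>R pderiv_t F qs t) (at t)"
    using gS.IH by (intro hvd_cmul)
  have e: "pderiv_t (\<lambda>qs t. c *\<^sub>R F qs t) qs t = c *\<^sub>R pderiv_t F qs t" by (rule pt_eq) (rule h)
  show ?case unfolding e by (rule h)
next
  case (gM F j' i)
  have h: "((\<lambda>\<tau>. qs j' $ i *\<^sub>R F qs \<tau>) has_vector_derivative qs j' $ i *\<^sub>R pderiv_t F qs t) (at t)"
    using gM.IH by (intro hvd_cmul)
  have e: "pderiv_t (\<lambda>qs t. qs j' $ i *\<^sub>R F qs t) qs t = qs j' $ i *\<^sub>R pderiv_t F qs t" by (rule pt_eq) (rule h)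
  show ?case unfolding e by (rule h)
qed



declare iter_dirderiv.simps(2)[simp del]

context
  fixes X :: "(real^'l::finite) \<times> real \<Rightarrow> 'b::real_inner"
  assumes sm: "smooth X"
begin

lemma pq_B: "pderiv_q j k (\<lambda>qs t. iter_dirderiv X vs (qs 0, t))
   = (\<lambda>qs t. if j = 0 then iter_dirderiv X ((axis k 1, 0) # vs) (qs 0, t) else 0)"
  by (intro ext pq_eq hq_B[OF sm])

lemma pq_Z: "pderiv_q j k (\<lambda>qs t. 0 :: 'c::real_normed_vector) = (\<lambda>qs t. 0)"
  by (intro ext pq_eq) simp

lemma pq_A: "good X F \<Longrightarrow> good X G \<Longrightarrow> pderiv_q j k (\<lambda>qs t. F qs t + G qs t)
   = (\<lambda>qs t. pderiv_q j k F qs t + pderiv_q j k G qs t)"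
  by (intro ext pq_eq has_vector_derivative_add good_hq[OF sm])

lemma pq_S: "good X F \<Longrightarrow> pderiv_q j k (\<lambda>qs t. c *\<^sub>R F qs t)
   = (\<lambda>qs t. c *\<^sub>R pderiv_q j k F qs t)"
  by (intro ext pq_eq hvd_cmul good_hq[OF sm])

lemma pq_M: "good X F \<Longrightarrow> pderiv_q a b (\<lambda>qs t. qs j $ i *\<^sub>R F qs t)
   = (\<lambda>qs t. qs j $ i *\<^sub>R pderiv_q a b F qs t + (if a = j \<and> b = i then 1 else 0) *\<^sub>R F qs t)"
proof (intro ext pq_eq)
  fix qs t assume g: "good X F"
  have h0: "((\<lambda>s. (qs(a := qs a + s *\<^sub>R axis b 1)) j $ i *\<^sub>R F (qs(a := qs a + s *\<^sub>R axis b 1)) t)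
      has_vector_derivative (qs(a := qs a + 0 *\<^sub>R axis b 1)) j $ i *\<^sub>R pderiv_q a b F qs t
         + (if a = j \<and> b = i then 1 else 0) *\<^sub>R F (qs(a := qs a + 0 *\<^sub>R axis b 1)) t) (at 0)"
    using good_hq[OF sm g] by (intro has_vector_derivative_scaleR coord_hvd)
  then show "((\<lambda>s. (qs(a := qs a + s *\<^sub>R axis b 1)) j $ i *\<^sub>R F (qs(a := qs a + s *\<^sub>R axis b 1)) t)
      has_vector_derivative qs j $ i *\<^sub>R pderiv_q a b F qs t
         + (if a = j \<and> b = i then 1 else 0) *\<^sub>R F qs t) (at 0)"
    by (simp only: scale_zero_left add_0_right fun_upd_triv)
qed

lemma pt_B: "pderiv_t (\<lambda>qs t. iter_dirderiv X vs (qs 0, t))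
   = (\<lambda>qs t. iter_dirderiv X ((0, 1) # vs) (qs 0, t))"
  by (intro ext pt_eq ht_B[OF sm])

lemma pt_Z: "pderiv_t (\<lambda>qs t. 0 :: 'c::real_normed_vector) = (\<lambda>qs t. 0)"
  by (intro ext pt_eq) simp

lemma pt_A: "good X F \<Longrightarrow> good X G \<Longrightarrow> pderiv_t (\<lambda>qs t. F qs t + G qs t)
   = (\<lambda>qs t. pderiv_t F qs t + pderiv_t G qs t)"
  by (intro ext pt_eq has_vector_derivative_add good_ht[OF sm])

lemma pt_S: "good X F \<Longrightarrow> pderiv_t (\<lambda>qs t. c *\<^sub>R F qs t)
   = (\<lambda>qs t. c *\<^sub>R pderiv_t F qs t)"
  by (intro ext pt_eq hvd_cmul good_ht[OF sm])

lemma pt_M: "good X F \<Longrightarrow> pderiv_t (\<lambda>qs t. qs j $ i *\<^sub>R F qs t)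
   = (\<lambda>qs t. qs j $ i *\<^sub>R pderiv_t F qs t)"
  by (intro ext pt_eq hvd_cmul good_ht[OF sm])

lemma good_pq: "good X F \<Longrightarrow> good X (pderiv_q j k F)"
proof (induction rule: good.induct)
  case (gB vs)
  show ?case unfolding pq_B by (cases "j = 0") (auto intro: good.intros)
next
  case gZ
  show ?case unfolding pq_Z by (rule good.gZ)
next
  case (gA F G)
  show ?case unfolding pq_A[OF gA.hyps] using gA.IH by (rule good.gA)
next
  case (gS F c)
  show ?case unfolding pq_S[OF gS.hyps] using gS.IH by (rule good.gS)
next
  case (gM F j' i)
  show ?case unfolding pq_M[OF gM.hyps] using gM.IH gM.hyps by (intro good.intros)
qed

lemma good_pt: "good X F \<Longrightarrow> good X (pderiv_t F)"
proof (induction rule: good.induct)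
  case (gB vs)
  show ?case unfolding pt_B by (rule good.gB)
next
  case gZ
  show ?case unfolding pt_Z by (rule good.gZ)
next
  case (gA F G)
  show ?case unfolding pt_A[OF gA.hyps] using gA.IH by (rule good.gA)
next
  case (gS F c)
  show ?case unfolding pt_S[OF gS.hyps] using gS.IH by (rule good.gS)
next
  case (gM F j' i)
  show ?case unfolding pt_M[OF gM.hyps] using gM.IH gM.hyps by (intro good.intros)
qed

lemma comm_qq: "good X F \<Longrightarrow> pderiv_q a b (pderiv_q c d F) = pderiv_q c d (pderiv_q a b F)"
proof (induction rule: good.induct)
  case (gB vs)
  show ?case
    by (cases "a = 0"; cases "c = 0") (simp_all add: pq_B pq_Z iter_swap[OF sm])
next
  case gZ
  show ?case by (simp add: pq_Z)
next
  case (gA F G)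
  show ?case using gA by (simp add: pq_A good_pq)
next
  case (gS F c)
  show ?case using gS by (simp add: pq_S good_pq)
next
  case (gM F j i)
  have g1: "good X (\<lambda>qs t. qs j $ i *\<^sub>R pderiv_q c d F qs t)" using gM by (intro good.intros good_pq)
  have g2: "good X (\<lambda>qs t. (if c = j \<and> d = i then 1 else 0) *\<^sub>R F qs t)" using gM by (intro good.intros good_pq)
  have g3: "good X (\<lambda>qs t. qs j $ i *\<^sub>R pderiv_q a b F qs t)" using gM by (intro good.intros good_pq)
  have g4: "good X (\<lambda>qs t. (if a = j \<and> b = i then 1 else 0) *\<^sub>R F qs t)" using gM by (intro good.intros good_pq)
  show ?case
    unfolding pq_M[OF gM.hyps] pq_A[OF g1 g2] pq_A[OF g3 g4]
      pq_M[OF good_pq[OF gM.hyps]] pq_S[OF gM.hyps] gM.IH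
    by (simp add: fun_eq_iff algebra_simps)
qed

lemma comm_qt: "good X F \<Longrightarrow> pderiv_q a b (pderiv_t F) = pderiv_t (pderiv_q a b F)"
proof (induction rule: good.induct)
  case (gB vs)
  show ?case
    by (cases "a = 0") (simp_all add: pq_B pq_Z pt_B pt_Z iter_swap[OF sm])
next
  case gZ
  show ?case by (simp add: pq_Z pt_Z)
next
  case (gA F G)
  show ?case using gA by (simp add: pq_A pt_A good_pq good_pt)
next
  case (gS F c)
  show ?case using gS by (simp add: pq_S pt_S good_pq good_pt)
next
  case (gM F j i)
  have g3: "good X (\<lambda>qs t. qs j $ i *\<^sub>R pderiv_q a b F qs t)" using gM by (intro good.intros good_pq)
  have g4: "good X (\<lambda>qs t. (if a = j \<and> b = i then 1 else 0) *\<^sub>R F qs t)" using gM by (intro good.intros good_pq)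
  show ?case
    unfolding pq_M[OF gM.hyps] pt_A[OF g3 g4] pt_M[OF gM.hyps] pq_M[OF good_pt[OF gM.hyps]]
      pt_M[OF good_pq[OF gM.hyps]] pt_S[OF gM.hyps] gM.IH
    by (simp add: fun_eq_iff algebra_simps)
qed

end


declare iter_dirderiv.simps(2)[simp del]

definition dep :: "nat \<Rightarrow> ('l::finite, 'b) jetfun \<Rightarrow> bool" where
  "dep n F \<longleftrightarrow> (\<forall>qs qs' t. (\<forall>j\<le>n. qs j = qs' j) \<longrightarrow> F qs t = F qs' t)"

lemma dep_pq_zero:
  fixes F :: "('l::finite, 'b::real_normed_vector) jetfun"
  assumes "dep n F" "n < j"
  shows "pderiv_q j k F = (\<lambda>qs t. 0)"
proof (intro ext pq_eq)
  fix qs :: "nat \<Rightarrow> real^'l" and t :: real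
  have "(\<lambda>s. F (qs(j := qs j + s *\<^sub>R axis k 1)) t) = (\<lambda>s. F qs t)"
    using assms unfolding dep_def by (intro ext) (metis fun_upd_other leD)
  then show "((\<lambda>s. F (qs(j := qs j + s *\<^sub>R axis k 1)) t) has_vector_derivative 0) (at 0)" by simp
qed

lemma dep_pq:
  fixes F :: "('l::finite, 'b::real_normed_vector) jetfun"
  assumes "dep n F"
  shows "dep n (pderiv_q j k F)"
  unfolding dep_def
proof (intro allI impI)
  fix qs qs' :: "nat \<Rightarrow> real^'l" and t :: real assume a: "\<forall>i\<le>n. qs i = qs' i"
  have "(\<lambda>s. F (qs(j := qs j + s *\<^sub>R axis k 1)) t) = (\<lambda>s. F (qs'(j := qs' j + s *\<^sub>R axis k 1)) t)"
  proof
    fix s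
    have "\<forall>i\<le>n. (qs(j := qs j + s *\<^sub>R axis k 1)) i = (qs'(j := qs' j + s *\<^sub>R axis k 1)) i"
      using a by auto
    then show "F (qs(j := qs j + s *\<^sub>R axis k 1)) t = F (qs'(j := qs' j + s *\<^sub>R axis k 1)) t"
      using assms unfolding dep_def by blast
  qed
  then show "pderiv_q j k F qs t = pderiv_q j k F qs' t" by (simp add: pderiv_q_def)
qed

lemma dep_pt:
  fixes F :: "('l::finite, 'b::real_normed_vector) jetfun"
  assumes "dep n F"
  shows "dep n (pderiv_t F)"
  unfolding dep_def
proof (intro allI impI)
  fix qs qs' :: "nat \<Rightarrow> real^'l" and t :: real assume a: "\<forall>i\<le>n. qs i = qs' i"
  have "(\<lambda>\<tau>. F qs \<tau>) = (\<lambda>\<tau>. F qs' \<tau>)" using assms a unfolding dep_def by blast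
  then show "pderiv_t F qs t = pderiv_t F qs' t" by (simp add: pderiv_t_def)
qed

lemma dep_mono: "dep n F \<Longrightarrow> n \<le> m \<Longrightarrow> dep m F"
  unfolding dep_def by auto

lemma dep_td:
  fixes F :: "('l::finite, 'b::real_normed_vector) jetfun"
  assumes "dep kk F"
  shows "dep (Suc kk) (total_dt kk F)"
  unfolding dep_def
proof (intro allI impI)
  fix qs qs' :: "nat \<Rightarrow> real^'l" and t :: real assume a: "\<forall>i\<le>Suc kk. qs i = qs' i"
  have a': "\<forall>i\<le>kk. qs i = qs' i" using a by auto
  have 1: "pderiv_t F qs t = pderiv_t F qs' t" using dep_pt[OF assms] a' unfolding dep_def by blast
  have 2: "pderiv_q j k F qs t = pderiv_q j k F qs' t" for j k
    using dep_pq[OF assms] a' unfolding dep_def by blast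
  show "total_dt kk F qs t = total_dt kk F qs' t"
    unfolding total_dt_def using 1 2 a by (auto intro!: sum.cong)
qed

lemma dep_Xder: "dep h (Xder X h)"
proof (induction h)
  case 0 then show ?case by (simp add: dep_def)
next
  case (Suc h) then show ?case by (simp add: dep_td)
qed

lemma pq_Z0: "pderiv_q j k (\<lambda>qs t. 0 :: 'c::real_normed_vector) = (\<lambda>qs t. 0)"
  by (intro ext pq_eq) simp

lemma pt_Z0: "pderiv_t (\<lambda>qs t. 0 :: 'c::real_normed_vector) = (\<lambda>qs t. 0)"
  by (intro ext pt_eq) simp

lemma td_zero: "total_dt kk (\<lambda>qs t. 0 :: 'b::real_normed_vector) = (\<lambda>qs (t::real). 0)"
  unfolding total_dt_def pq_Z0 pt_Z0 by simp

lemma td0: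
  fixes G :: "('l::finite, 'b::real_normed_vector) jetfun"
  assumes "dep 0 G"
  shows "total_dt kk G = total_dt 0 G"
proof (induction kk)
  case 0 show ?case ..
next
  case (Suc kk)
  have z: "pderiv_q (Suc kk) k G = (\<lambda>qs t. 0)" for k using dep_pq_zero[OF assms] by simp
  show ?case using Suc unfolding total_dt_def by (simp add: z fun_eq_iff)
qed

context
  fixes X :: "(real^'l::finite) \<times> real \<Rightarrow> 'b::real_inner"
  assumes sm: "smooth X"
begin

lemma good_sum: "finite S \<Longrightarrow> (\<And>x. x \<in> S \<Longrightarrow> good X (G x)) \<Longrightarrow> good X (\<lambda>qs t. \<Sum>x\<in>S. G x qs t)"
proof (induction S rule: finite_induct)
  case empty then show ?case by (simp add: good.gZ)
next
  case (insert x F) then show ?case by (simp add: good.gA)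
qed

lemma pq_sum: "finite S \<Longrightarrow> (\<And>x. x \<in> S \<Longrightarrow> good X (G x)) \<Longrightarrow>
   pderiv_q a b (\<lambda>qs t. \<Sum>x\<in>S. G x qs t) = (\<lambda>qs t. \<Sum>x\<in>S. pderiv_q a b (G x) qs t)"
proof (induction S rule: finite_induct)
  case empty then show ?case by (simp add: pq_Z0)
next
  case (insert x F) then show ?case by (simp add: pq_A[OF sm] good_sum)
qed

lemma pt_sum: "finite S \<Longrightarrow> (\<And>x. x \<in> S \<Longrightarrow> good X (G x)) \<Longrightarrow>
   pderiv_t (\<lambda>qs t. \<Sum>x\<in>S. G x qs t) = (\<lambda>qs t. \<Sum>x\<in>S. pderiv_t (G x) qs t)"
proof (induction S rule: finite_induct)
  case empty then show ?case by (simp add: pt_Z0)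
next
  case (insert x F) then show ?case by (simp add: pt_A[OF sm] good_sum)
qed

lemma good_td: "good X F \<Longrightarrow> good X (total_dt kk F)"
  unfolding total_dt_def
  by (intro good.gA good_pt[OF sm] good_sum good.gM good_pq[OF sm] finite_atMost finite_class.finite_UNIV)

lemma sum_delta_aux:
  fixes G :: "nat \<Rightarrow> 'k::finite \<Rightarrow> 'c::real_vector"
  shows "(\<Sum>j\<le>kk. \<Sum>k\<in>UNIV. (if a = Suc j \<and> b = k then 1 else 0) *\<^sub>R (G j k :: 'c::real_vector))
    = (if 0 < a \<and> a \<le> Suc kk then G (a - 1) b else 0)"
proof -
  have "(\<Sum>k\<in>UNIV. (if a = Suc j \<and> b = k then 1 else 0) *\<^sub>R (G j k :: 'c)) = (if j = a - 1 \<and> 0 < a then G j b else 0)" for j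
    by (cases "a = Suc j") (auto simp: if_distrib[of "\<lambda>c. c *\<^sub>R _"] sum.delta' cong: if_cong)
  then have "(\<Sum>j\<le>kk. \<Sum>k\<in>UNIV. (if a = Suc j \<and> b = k then 1 else 0) *\<^sub>R (G j k :: 'c))
      = (\<Sum>j\<le>kk. if j = a - 1 then (if 0 < a then G j b else 0) else 0)"
    by (intro sum.cong) auto
  also have "\<dots> = (if 0 < a \<and> a \<le> Suc kk then G (a - 1) b else 0)"
    by (subst sum.delta) auto
  finally show ?thesis .
qed

lemma pq_td: "good X F \<Longrightarrow> pderiv_q a b (total_dt kk F)
   = (\<lambda>qs t. total_dt kk (pderiv_q a b F) qs t
        + (if 0 < a \<and> a \<le> Suc kk then pderiv_q (a - 1) b F qs t else 0))"
proof -
  assume g: "good X F"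
  have gs: "good X (\<lambda>qs t. \<Sum>k\<in>UNIV. qs (Suc j) $ k *\<^sub>R pderiv_q j k F qs t)" for j
    by (intro good_sum good.gM good_pq[OF sm] g finite_class.finite_UNIV)
  have gs2: "good X (\<lambda>qs t. \<Sum>j\<le>kk. \<Sum>k\<in>UNIV. qs (Suc j) $ k *\<^sub>R pderiv_q j k F qs t)"
    by (intro good_sum gs finite_atMost)
  have e: "pderiv_q a b (total_dt kk F) = (\<lambda>qs t. pderiv_t (pderiv_q a b F) qs t +
     (\<Sum>j\<le>kk. \<Sum>k\<in>UNIV. qs (Suc j) $ k *\<^sub>R pderiv_q j k (pderiv_q a b F) qs t
        + (if a = Suc j \<and> b = k then 1 else 0) *\<^sub>R pderiv_q j k F qs t))"
    unfolding total_dt_def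
    apply (subst pq_A[OF sm good_pt[OF sm g] gs2])
    apply (subst pq_sum[OF finite_atMost gs])
    apply (subst pq_sum[OF finite_class.finite_UNIV], rule good.gM, rule good_pq[OF sm g])
    apply (subst pq_M[OF sm good_pq[OF sm g]])
    apply (simp add: comm_qt[OF sm g] comm_qq[OF sm g])
    done
  show ?thesis unfolding e
  proof (intro ext)
    fix qs :: "nat \<Rightarrow> real^'l" and t :: real
    show "pderiv_t (pderiv_q a b F) qs t +
     (\<Sum>j\<le>kk. \<Sum>k\<in>UNIV. qs (Suc j) $ k *\<^sub>R pderiv_q j k (pderiv_q a b F) qs t
        + (if a = Suc j \<and> b = k then 1 else 0) *\<^sub>R pderiv_q j k F qs t)
      = total_dt kk (pderiv_q a b F) qs t
        + (if 0 < a \<and> a \<le> Suc kk then pderiv_q (a - 1) b F qs t else 0)"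
      unfolding total_dt_def sum.distrib sum_delta_aux[where G="\<lambda>j k. pderiv_q j k F qs t"]
      by (simp add: algebra_simps)
  qed
qed

end



declare iter_dirderiv.simps(2)[simp del] Xder.simps[simp del]

context
  fixes X :: "(real^'l::finite) \<times> real \<Rightarrow> real^3^'p::finite"
  assumes sm: "smooth X"
begin

lemma good_Xder: "good X (Xder X h)"
proof (induction h)
  case 0
  have "Xder X 0 = (\<lambda>qs t. iter_dirderiv X [] (qs 0, t))" by (simp add: Xder.simps)
  then show ?case using good.gB by metis
next
  case (Suc h) then show ?case by (simp add: Xder.simps(2) good_td[OF sm])
qed

lemma XA: "pderiv_q h k (Xder X h) = pderiv_q 0 k (Xder X 0)"
proof (induction h)
  case 0 show ?case ..
next
  case (Suc h)
  have z: "pderiv_q (Suc h) k (Xder X h) = (\<lambda>qs t. 0)"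
    by (rule dep_pq_zero[OF dep_Xder]) simp
  show ?case unfolding Xder.simps(2)
    by (simp add: pq_td[OF sm good_Xder] z td_zero Suc)
qed

lemma suc_scale: "v + real (Suc r) *\<^sub>R v = real (Suc (Suc r)) *\<^sub>R (v::'a::real_vector)"
proof -
  have "real (Suc (Suc r)) = 1 + real (Suc r)" by simp
  then show ?thesis by (simp only: scaleR_add_left scaleR_one)
qed

lemma XB: "pderiv_q r k (Xder X (Suc r)) = (\<lambda>qs t. real (Suc r) *\<^sub>R total_dt 0 (pderiv_q 0 k (Xder X 0)) qs t)"
proof (induction r)
  case 0
  show ?case unfolding Xder.simps(2) by (simp add: pq_td[OF sm good_Xder])
next
  case (Suc r)
  have d: "dep 0 (pderiv_q 0 k (Xder X 0))" by (rule dep_pq[OF dep_Xder])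
  have "pderiv_q (Suc r) k (Xder X (Suc (Suc r))) = (\<lambda>qs t. total_dt (Suc r) (pderiv_q (Suc r) k (Xder X (Suc r))) qs t
        + pderiv_q r k (Xder X (Suc r)) qs t)"
    unfolding Xder.simps(2)[of X "Suc r"] by (simp add: pq_td[OF sm good_Xder])
  also have "\<dots> = (\<lambda>qs t. total_dt 0 (pderiv_q 0 k (Xder X 0)) qs t
        + real (Suc r) *\<^sub>R total_dt 0 (pderiv_q 0 k (Xder X 0)) qs t)"
    by (simp only: XA[where h="Suc r"] Suc td0[OF d, where kk="Suc r"])
  also have "\<dots> = (\<lambda>qs t. real (Suc (Suc r)) *\<^sub>R total_dt 0 (pderiv_q 0 k (Xder X 0)) qs t)"
    by (simp only: suc_scale)
  finally show ?case .
qed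

end

definition Mm :: "('p::finite \<Rightarrow> real) \<Rightarrow> real^'n^'p \<Rightarrow> real^'n^'p" where
  "Mm m v = (\<chi> i. m i *\<^sub>R v $ i)"

lemma lin_Mm: "linear (Mm m)"
  by (rule linearI) (simp_all add: Mm_def vec_eq_iff algebra_simps)

lemma blin_Mm: "bounded_linear (Mm m)"
  using lin_Mm linear_conv_bounded_linear by blast

lemma Mm_sym: "Mm m a \<bullet> b = Mm m b \<bullet> a"
  by (simp add: Mm_def inner_vec_def inner_commute mult_ac)

lemma hvd_MP:
  assumes "(y has_vector_derivative y') (at x)" "(z has_vector_derivative z') (at x)"
  shows "((\<lambda>s. Mm m (y s) \<bullet> z s) has_vector_derivative (Mm m (y x) \<bullet> z' + Mm m y' \<bullet> z x)) (at x)"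
  using bounded_bilinear.has_vector_derivative[OF bounded_bilinear_inner
      bounded_linear.has_vector_derivative[OF blin_Mm assms(1)] assms(2)] .

context
  fixes X :: "(real^'l::finite) \<times> real \<Rightarrow> real^'n^'p::finite"
  assumes sm: "smooth X"
begin

lemma pqP: "good X Y \<Longrightarrow> good X Z \<Longrightarrow> pderiv_q j k (\<lambda>qs t. Mm m (Y qs t) \<bullet> Z qs t)
   = (\<lambda>qs t. Mm m (Y qs t) \<bullet> pderiv_q j k Z qs t + Mm m (pderiv_q j k Y qs t) \<bullet> Z qs t)"
proof (intro ext pq_eq)
  fix qs t assume gY: "good X Y" and gZ: "good X Z"
  have "((\<lambda>s. Mm m (Y (qs(j := qs j + s *\<^sub>R axis k 1)) t) \<bullet> Z (qs(j := qs j + s *\<^sub>R axis k 1)) t)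
     has_vector_derivative (Mm m (Y (qs(j := qs j + 0 *\<^sub>R axis k 1)) t) \<bullet> pderiv_q j k Z qs t
        + Mm m (pderiv_q j k Y qs t) \<bullet> Z (qs(j := qs j + 0 *\<^sub>R axis k 1)) t)) (at 0)"
    by (intro hvd_MP good_hq[OF sm gY] good_hq[OF sm gZ])
  then show "((\<lambda>s. Mm m (Y (qs(j := qs j + s *\<^sub>R axis k 1)) t) \<bullet> Z (qs(j := qs j + s *\<^sub>R axis k 1)) t)
     has_vector_derivative (Mm m (Y qs t) \<bullet> pderiv_q j k Z qs t
        + Mm m (pderiv_q j k Y qs t) \<bullet> Z qs t)) (at 0)"
    by (simp only: scale_zero_left add_0_right fun_upd_triv)
qed

lemma ptP: "good X Y \<Longrightarrow> good X Z \<Longrightarrow> pderiv_t (\<lambda>qs t. Mm m (Y qs t) \<bullet> Z qs t)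
   = (\<lambda>qs t. Mm m (Y qs t) \<bullet> pderiv_t Z qs t + Mm m (pderiv_t Y qs t) \<bullet> Z qs t)"
  by (intro ext pt_eq hvd_MP good_ht[OF sm])

lemma pqT: "good X Y \<Longrightarrow> pderiv_q j k (\<lambda>qs t. (1/2) *\<^sub>R (Mm m (Y qs t) \<bullet> Y qs t))
   = (\<lambda>qs t. Mm m (Y qs t) \<bullet> pderiv_q j k Y qs t)"
proof (intro ext pq_eq)
  fix qs t assume gY: "good X Y"
  have "((\<lambda>s. (1/2) *\<^sub>R (Mm m (Y (qs(j := qs j + s *\<^sub>R axis k 1)) t) \<bullet> Y (qs(j := qs j + s *\<^sub>R axis k 1)) t))
     has_vector_derivative (1/2) *\<^sub>R (Mm m (Y (qs(j := qs j + 0 *\<^sub>R axis k 1)) t) \<bullet> pderiv_q j k Y qs t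
        + Mm m (pderiv_q j k Y qs t) \<bullet> Y (qs(j := qs j + 0 *\<^sub>R axis k 1)) t)) (at 0)"
    by (intro hvd_cmul hvd_MP good_hq[OF sm gY])
  then have "((\<lambda>s. (1/2) *\<^sub>R (Mm m (Y (qs(j := qs j + s *\<^sub>R axis k 1)) t) \<bullet> Y (qs(j := qs j + s *\<^sub>R axis k 1)) t))
     has_vector_derivative (1/2) *\<^sub>R (Mm m (Y qs t) \<bullet> pderiv_q j k Y qs t
        + Mm m (pderiv_q j k Y qs t) \<bullet> Y qs t)) (at 0)"
    by (simp only: scale_zero_left add_0_right fun_upd_triv)
  moreover have "(1/2) *\<^sub>R (Mm m (Y qs t) \<bullet> pderiv_q j k Y qs t
        + Mm m (pderiv_q j k Y qs t) \<bullet> Y qs t) = Mm m (Y qs t) \<bullet> pderiv_q j k Y qs t"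
    by (simp add: Mm_sym[of m "pderiv_q j k Y qs t"])
  ultimately show "((\<lambda>s. (1/2) *\<^sub>R (Mm m (Y (qs(j := qs j + s *\<^sub>R axis k 1)) t) \<bullet> Y (qs(j := qs j + s *\<^sub>R axis k 1)) t))
     has_vector_derivative Mm m (Y qs t) \<bullet> pderiv_q j k Y qs t) (at 0)" by simp
qed

lemma tdP: "good X Y \<Longrightarrow> good X Z \<Longrightarrow> total_dt kk (\<lambda>qs t. Mm m (Y qs t) \<bullet> Z qs t)
   = (\<lambda>qs t. Mm m (Y qs t) \<bullet> total_dt kk Z qs t + Mm m (total_dt kk Y qs t) \<bullet> Z qs t)"
proof (intro ext)
  fix qs t assume gY: "good X Y" and gZ: "good X Z"
  have L: "Mm m (total_dt kk Y qs t) = Mm m (pderiv_t Y qs t)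
      + (\<Sum>j\<le>kk. \<Sum>k\<in>UNIV. qs (Suc j) $ k *\<^sub>R Mm m (pderiv_q j k Y qs t))"
    by (simp add: total_dt_def linear_add[OF lin_Mm] linear_sum[OF lin_Mm] linear_cmul[OF lin_Mm])
  show "total_dt kk (\<lambda>qs t. Mm m (Y qs t) \<bullet> Z qs t) qs t
     = Mm m (Y qs t) \<bullet> total_dt kk Z qs t + Mm m (total_dt kk Y qs t) \<bullet> Z qs t"
    unfolding L unfolding total_dt_def pqP[OF gY gZ] ptP[OF gY gZ]
    by (simp add: inner_add_left inner_add_right inner_sum_left inner_sum_right sum.distrib distrib_left)
qed

end

theorem proposition1p4:
  fixes X :: "(real ^ 'l::finite) \<times> real \<Rightarrow> real ^ 3 ^ 'p::finite"
    and m :: "'p \<Rightarrow> real"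
    and r :: nat and k :: 'l
    and qs :: "nat \<Rightarrow> real ^ 'l" and t :: real
  assumes "smooth X"
    and "\<And>i. m i > 0"
  shows "Qder m X (Suc r) qs t \<bullet> pderiv_q 0 k (Xder X 0) qs t
       = total_dt (Suc r) (pderiv_q (Suc r) k (Tr m X r)) qs t
         - (1 / real (Suc r)) * pderiv_q r k (Tr m X r) qs t"
proof -
  note sm = assms(1)
  define Y where "Y = Xder X (Suc r)"
  define J where "J = pderiv_q 0 k (Xder X 0)"
  have gY: "good X Y" unfolding Y_def by (rule good_Xder[OF sm])
  have gJ: "good X J" unfolding J_def by (rule good_pq[OF sm good_Xder[OF sm]])
  have dJ: "dep 0 J" unfolding J_def by (rule dep_pq[OF dep_Xder])
  have T: "Tr m X r = (\<lambda>qs t. (1/2) *\<^sub>R (Mm m (Y qs t) \<bullet> Y qs t))"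
    by (simp only: Tr_def Qder_def Mm_def Y_def real_scaleR_def)
  have Q: "Qder m X (Suc r) = (\<lambda>qs t. Mm m (total_dt (Suc r) Y qs t))"
    by (simp only: Qder_def Mm_def Y_def Xder.simps(2))
  have PY1: "pderiv_q (Suc r) k Y = J" unfolding Y_def J_def by (rule XA[OF sm])
  have PY0: "pderiv_q r k Y = (\<lambda>qs t. real (Suc r) *\<^sub>R total_dt 0 J qs t)"
    unfolding Y_def J_def by (rule XB[OF sm])
  have 1: "pderiv_q (Suc r) k (Tr m X r) = (\<lambda>qs t. Mm m (Y qs t) \<bullet> J qs t)"
    unfolding T pqT[OF sm gY] PY1 ..
  have 2: "pderiv_q r k (Tr m X r) = (\<lambda>qs t. Mm m (Y qs t) \<bullet> (real (Suc r) *\<^sub>R total_dt 0 J qs t))"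
    unfolding T pqT[OF sm gY] PY0 ..
  have 3: "total_dt (Suc r) J = total_dt 0 J" by (rule td0[OF dJ])
  define a where "a = Mm m (Y qs t) \<bullet> total_dt 0 J qs t"
  define b where "b = Mm m (total_dt (Suc r) Y qs t) \<bullet> J qs t"
  have e1: "total_dt (Suc r) (pderiv_q (Suc r) k (Tr m X r)) qs t = a + b"
    unfolding 1 tdP[OF sm gY gJ] 3 a_def b_def ..
  have e2: "pderiv_q r k (Tr m X r) qs t = real (Suc r) * a"
    unfolding 2 a_def by (simp only: inner_scaleR_right)
  have e3: "Qder m X (Suc r) qs t \<bullet> pderiv_q 0 k (Xder X 0) qs t = b"
    unfolding Q J_def[symmetric] b_def ..
  have e4: "1 / real (Suc r) * (real (Suc r) * a) = a" by simp
  show ?thesis unfolding e1 e2 e3 using e4 by linarith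
qed


end
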